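(* Let $(V,\mathrm{dist})$ be a metric space and let $B\subseteq A\subseteq V$ be finite (multi)sets. Then $$\mathrm{MaxCut}(B)+\tfrac14\,\mathrm{cut}(A\setminus B,A\setminus B)+\tfrac12\,\mathrm{cut}(A\setminus B,B)\ \le\ \mathrm{MaxCut}(A).$$
   Context: For $S,T\subseteq V$, $\mathrm{cut}(S,T):=\sum_{x\in S}\sum_{y\in T}\mathrm{dist}(x,y)$, and $\mathrm{MaxCut}(S):=\max_{T\subseteq S}\mathrm{cut}(T,S\setminus T)$. *)

theory Defs
  imports "HOL-Analysis.Analysis" "HOL-Library.Multiset"
begin

definition cut :: "'a::metric_space multiset \<Rightarrow> 'a multiset \<Rightarrow> real" where
  "cut S T = (\<Sum>x\<in>#S. \<Sum>y\<in>#T. dist x y)"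

text \<open>MaxCut(S) = max over sub-multisets T of S of cut(T, S - T).
  The set of sub-multisets of a (finite) multiset is finite and nonempty.\<close>
definition MaxCut :: "'a::metric_space multiset \<Rightarrow> real" where
  "MaxCut S = Max ((\<lambda>T. cut T (S - T)) ` {T. T \<subseteq># S})"

end

theory Submission
  imports Defs
begin

lemma fin_sub: "finite {T. T \<subseteq># (S::'b multiset)}"
proof -
  have "{T. T \<subseteq># S} \<subseteq> mset ` {ys. set ys \<subseteq> set_mset S \<and> length ys \<le> size S}"
  proof
    fix T assume "T \<in> {T. T \<subseteq># S}"
    hence T: "T \<subseteq># S" by simp
    obtain xs where xs: "mset xs = T" using ex_mset by blast
    have "set xs \<subseteq> set_mset S" using xs T by (metis set_mset_mono set_mset_mset)
    moreover have "length xs \<le> size S" using xs T by (metis size_mset size_mset_mono)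
    ultimately show "T \<in> mset ` {ys. set ys \<subseteq> set_mset S \<and> length ys \<le> size S}"
      using xs by blast
  qed
  moreover have "finite {ys. set ys \<subseteq> set_mset S \<and> length ys \<le> size S}"
    using finite_lists_length_le by blast
  ultimately show ?thesis by (meson finite_imageI finite_subset)
qed

lemma cut_add_left: "cut (add_mset x S) T = (\<Sum>y\<in>#T. dist x y) + cut S T"
  by (simp add: cut_def)

lemma cut_add_right: "cut S (add_mset y T) = (\<Sum>x\<in>#S. dist x y) + cut S T"
  by (simp add: cut_def sum_mset.distrib)

lemma cut_empty_left [simp]: "cut {#} T = 0" by (simp add: cut_def)
lemma cut_empty_right [simp]: "cut S {#} = 0" by (simp add: cut_def)

lemma step:
  assumes "S \<subseteq># D"
  shows "\<exists>S'. S' \<subseteq># add_mset c D \<and>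
    cut S (D - S) + 1/2 * (\<Sum>y\<in>#D. dist c y) \<le> cut S' (add_mset c D - S')"
proof -
  have D: "D = S + (D - S)" using assms by simp
  have sumD: "(\<Sum>y\<in>#D. dist c y) = (\<Sum>y\<in>#S. dist c y) + (\<Sum>y\<in>#D - S. dist c y)"
    by (subst D) simp
  have e1: "cut (add_mset c S) (add_mset c D - add_mset c S) = (\<Sum>y\<in>#D - S. dist c y) + cut S (D - S)"
    by (simp add: cut_add_left)
  have "add_mset c D - S = add_mset c (D - S)" using assms
    by (metis add_mset_add_single subset_mset.add_diff_assoc2)
  hence e2: "cut S (add_mset c D - S) = (\<Sum>y\<in>#S. dist c y) + cut S (D - S)"
    by (simp add: cut_add_right dist_commute)
  show ?thesis
  proof (cases "(\<Sum>y\<in>#S. dist c y) \<le> (\<Sum>y\<in>#D - S. dist c y)")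
    case True
    show ?thesis
      by (rule exI[of _ "add_mset c S"]) (use assms True sumD e1 in auto)
  next
    case False
    have "D \<subseteq># add_mset c D" by simp
    hence "S \<subseteq># add_mset c D" using assms by (rule subset_mset.trans[rotated])
    show ?thesis
      by (rule exI[of _ S]) (use \<open>S \<subseteq># add_mset c D\<close> False sumD e2 in auto)
  qed
qed

lemma main:
  assumes "S \<subseteq># D"
  shows "\<exists>S'. S' \<subseteq># D + C \<and>
    cut S (D - S) + 1/2 * cut C D + 1/4 * cut C C \<le> cut S' (D + C - S')"
proof (induction C)
  case empty
  then show ?case using assms by auto
next
  case (add c C)
  then obtain S1 where S1: "S1 \<subseteq># D + C"
    "cut S (D - S) + 1/2 * cut C D + 1/4 * cut C C \<le> cut S1 (D + C - S1)" by blast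
  from step[OF S1(1), of c] obtain S' where S': "S' \<subseteq># add_mset c (D + C)"
    "cut S1 (D + C - S1) + 1/2 * (\<Sum>y\<in>#D + C. dist c y) \<le> cut S' (add_mset c (D + C) - S')"
    by blast
  have c1: "cut (add_mset c C) D = (\<Sum>y\<in>#D. dist c y) + cut C D" by (simp add: cut_add_left)
  have c2: "cut (add_mset c C) (add_mset c C) = 2 * (\<Sum>y\<in>#C. dist c y) + cut C C"
    by (simp add: cut_add_left cut_add_right dist_commute)
  have "cut S (D - S) + 1/2 * cut (add_mset c C) D + 1/4 * cut (add_mset c C) (add_mset c C)
     \<le> cut S' (add_mset c (D + C) - S')"
    unfolding c1 c2 using S1(2) S'(2) by (simp add: field_simps)
  then show ?case
    using S'(1) by (intro exI[of _ S']) simp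
qed

theorem fact4p6:
  fixes A B :: "'a::metric_space multiset"
  assumes "B \<subseteq># A"
  shows "MaxCut B + 1/4 * cut (A - B) (A - B) + 1/2 * cut (A - B) B \<le> MaxCut A"
proof -
  have "MaxCut B \<in> (\<lambda>T. cut T (B - T)) ` {T. T \<subseteq># B}"
    unfolding MaxCut_def by (rule Max_in) (auto simp: fin_sub)
  then obtain T where T: "T \<subseteq># B" "MaxCut B = cut T (B - T)" by auto
  from main[OF T(1), of "A - B"] obtain S' where S': "S' \<subseteq># B + (A - B)"
    "cut T (B - T) + 1/2 * cut (A - B) B + 1/4 * cut (A - B) (A - B) \<le> cut S' (B + (A - B) - S')"
    by blast
  have BA: "B + (A - B) = A" using assms by simp
  have "cut S' (A - S') \<le> MaxCut A"
    unfolding MaxCut_def using S' BA by (intro Max_ge) (auto simp: fin_sub)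
  thus ?thesis using S' T BA by auto
qed

end
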